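(* As formal power series in $t$, $$\sum_{m\ge 1}\frac{\big((m-1)!\big)^2t^{m}}{\prod_{k=1}^m (1+k^2 t)}=t \qquad\text{and}\qquad \sum_{m\ge 1}\frac{m!(m-1)!\,t^{m}}{\prod_{k=1}^m \big(1+k(k+1)t\big)}=t.$$ *)

theory Defs
  imports "HOL-Computational_Algebra.Formal_Power_Series"
begin

end

theory Submission
  imports Defs
begin

lemma tele_fps:
  fixes c d :: "nat \<Rightarrow> nat"
  assumes d0: "d 0 = 1" and dS: "\<And>m. d (Suc m) = d m * c (Suc m)"
  shows "(\<lambda>m. fps_const (of_nat (d m) :: rat) * fps_X ^ (m + 1)
            * inverse (\<Prod>k = 1..m + 1. 1 + fps_const (of_nat (c k)) * fps_X)) sums fps_X"
proof -
  define P where "P n = (\<Prod>k = 1..n. 1 + fps_const (of_nat (c k) :: rat) * fps_X)" for n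
  define R where "R n = fps_X ^ (n+1) * (fps_const (of_nat (d n) :: rat) * inverse (P n))" for n
  have P0: "fps_nth (P n) 0 = 1" for n
    by (induction n) (auto simp: P_def prod.nat_ivl_Suc' fps_mult_nth_0)
  have PS: "P (Suc m) = P m * (1 + fps_const (of_nat (c (Suc m))) * fps_X)" for m
    by (simp add: P_def prod.nat_ivl_Suc' mult.commute)
  have tm: "fps_const (of_nat (d m) :: rat) * fps_X ^ (m + 1)
            * inverse (\<Prod>k = 1..m + 1. 1 + fps_const (of_nat (c k)) * fps_X) = R m - R (Suc m)" for m
  proof -
    define I where "I = inverse (P m)"
    define A where "A = (1 + fps_const (of_nat (c (Suc m)) :: rat) * fps_X)"
    define J where "J = inverse A"
    have JA: "J * A = 1" unfolding J_def A_def by (rule inverse_mult_eq_1) simp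
    have inv: "inverse (P (Suc m)) = I * J"
      unfolding PS I_def J_def A_def by (simp add: fps_inverse_mult)
    have "R m = fps_X ^ (m+1) * (fps_const (of_nat (d m)) * I) * (J * A)"
      using JA by (simp add: R_def I_def)
    have cm: "fps_const (of_nat (d (Suc m)) :: rat) = fps_const (of_nat (d m)) * fps_const (of_nat (c (Suc m)))"
      by (simp add: dS)
    have "R (Suc m) = fps_X ^ (m+1) * fps_X * ((fps_const (of_nat (d m)) * fps_const (of_nat (c (Suc m)))) * (I * J))"
      unfolding R_def inv cm by simp
    also have "\<dots> = fps_X ^ (m+1) * (fps_const (of_nat (d m)) * I) * J
        * (fps_const (of_nat (c (Suc m))) * fps_X)"
      by (simp only: mult_ac)
    finally have RS: "R (Suc m) = \<dots>" .
    have Rm: "R m = fps_X ^ (m+1) * (fps_const (of_nat (d m)) * I) * J * A"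
      using JA by (simp add: R_def I_def mult.assoc)
    have "R m - R (Suc m) = fps_X ^ (m+1) * (fps_const (of_nat (d m)) * I) * J * (A - fps_const (of_nat (c (Suc m))) * fps_X)"
      unfolding Rm RS by (simp only: right_diff_distrib)
    also have "\<dots> = fps_X ^ (m+1) * (fps_const (of_nat (d m)) * I) * J"
      by (simp add: A_def)
    also have "\<dots> = fps_const (of_nat (d m)) * fps_X ^ (m + 1) * inverse (P (Suc m))"
      unfolding inv by (simp only: mult_ac)
    finally show ?thesis
      by (simp add: P_def)
  qed
  have R0: "R 0 = fps_X" by (simp add: R_def P_def d0)
  have Rk: "fps_nth (R n) k = 0" if "k \<le> n" for n k
    using that by (simp only: R_def fps_X_power_mult_nth, simp)
  have lim: "R \<longlonglongrightarrow> 0"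
  proof (rule tendsto_fpsI)
    fix k
    show "eventually (\<lambda>n. fps_nth (R n) k = fps_nth (0::rat fps) k) sequentially"
      using eventually_ge_at_top[of k]
      by eventually_elim (simp add: Rk)
  qed
  have "(\<lambda>n. R 0 - R n) \<longlonglongrightarrow> R 0 - 0"
  proof (rule tendsto_fpsI)
    fix k
    show "eventually (\<lambda>n. fps_nth (R 0 - R n) k = fps_nth (R 0 - 0) k) sequentially"
      using eventually_ge_at_top[of k]
      by eventually_elim (simp add: Rk)
  qed
  then show ?thesis
    unfolding sums_def tm sum_lessThan_telescope' using R0 by simp
qed

theorem corollary5p1:
  shows "(\<lambda>m. fps_const (of_nat (fact m ^ 2) :: rat) * fps_X ^ (m + 1)
            * inverse (\<Prod>k = 1..m + 1. 1 + fps_const (of_nat (k ^ 2)) * fps_X))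
           sums fps_X
       \<and> (\<lambda>m. fps_const (of_nat (fact (m + 1) * fact m) :: rat) * fps_X ^ (m + 1)
            * inverse (\<Prod>k = 1..m + 1. 1 + fps_const (of_nat (k * (k + 1))) * fps_X))
           sums fps_X"
proof
  show "(\<lambda>m. fps_const (of_nat (fact m ^ 2) :: rat) * fps_X ^ (m + 1)
            * inverse (\<Prod>k = 1..m + 1. 1 + fps_const (of_nat (k ^ 2)) * fps_X))
           sums fps_X"
    by (rule tele_fps[where d = "\<lambda>m. fact m ^ 2" and c = "\<lambda>k. k ^ 2"])
       (simp_all add: power2_eq_square algebra_simps)
  show "(\<lambda>m. fps_const (of_nat (fact (m + 1) * fact m) :: rat) * fps_X ^ (m + 1)
            * inverse (\<Prod>k = 1..m + 1. 1 + fps_const (of_nat (k * (k + 1))) * fps_X))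
           sums fps_X"
    by (rule tele_fps[where d = "\<lambda>m. fact (m + 1) * fact m" and c = "\<lambda>k. k * (k + 1)"])
       (simp_all add: algebra_simps)
qed

end
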